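(* Let $p_k(x,y)=\frac{1}{\pi}\frac{y}{(x-2\pi k)^2+y^2}$ for $k\in\mathbb{Z}$ and $h(x,y)=\frac{1}{2\pi}\frac{\sinh y}{\cosh y-\cos x}$, for $x\in\mathbb{R}$, $y>0$. For $y>0$ and $n\in\mathbb{Z}\setminus\{0\}$, \[ \int_{-\infty}^\infty h^{-1}(x,y)\,H\nabla p_0(x,y)\cdot\nabla p_n(x,y)\,dx+2\int_{-\infty}^\infty p_n(x,y)\,H\nabla p_0(x,y)\cdot\nabla h^{-1}(x,y)\,dx \] \[ =\frac{\pi n(3y^2-\pi^2n^2)}{(y^2+\pi^2n^2)^3}+\frac{y^2}{\pi n(y^2+\pi^2n^2)\sinh^2 y}. \]
   Context: $\nabla=(\partial_x,\partial_y)$; $H\nabla f=(-\partial_y f,\partial_x f)$ (i.e. $H=\begin{pmatrix}0&-1\\1&0\end{pmatrix}$); $h^{-1}=1/h$; the dot is the Euclidean inner product. *)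

theory Defs
  imports "HOL-Analysis.Analysis"
begin

definition pk :: "int \<Rightarrow> real \<Rightarrow> real \<Rightarrow> real" where
  "pk k x y = (1 / pi) * (y / ((x - 2 * pi * of_int k)^2 + y^2))"

definition hh :: "real \<Rightarrow> real \<Rightarrow> real" where
  "hh x y = (1 / (2 * pi)) * (sinh y / (cosh y - cos x))"

definition hinv :: "real \<Rightarrow> real \<Rightarrow> real" where
  "hinv x y = 1 / hh x y"

definition dx :: "(real \<Rightarrow> real \<Rightarrow> real) \<Rightarrow> real \<Rightarrow> real \<Rightarrow> real" where
  "dx f x y = deriv (\<lambda>t. f t y) x"

definition dy :: "(real \<Rightarrow> real \<Rightarrow> real) \<Rightarrow> real \<Rightarrow> real \<Rightarrow> real" where
  "dy f x y = deriv (\<lambda>t. f x t) y"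

text \<open>(H grad f) . (grad g) with H grad f = (-f_y, f_x).\<close>
definition Hgrad_dot :: "(real \<Rightarrow> real \<Rightarrow> real) \<Rightarrow> (real \<Rightarrow> real \<Rightarrow> real) \<Rightarrow> real \<Rightarrow> real \<Rightarrow> real" where
  "Hgrad_dot f g x y = (- dy f x y) * dx g x y + dx f x y * dy g x y"

end

theory Submission
  imports Defs "HOL-Complex_Analysis.Complex_Analysis" "HOL-Probability.Sinc_Integral"
begin

lemma integrable_inv_1_sq: "integrable lborel (\<lambda>x::real. inverse (1 + x^2))"
  using integrable_inverse_1_plus_square by (simp add: set_integrable_def einterval_eq_UNIV)

lemma integrable_bound_sq:
  fixes g :: "real \<Rightarrow> complex"
  assumes cont: "continuous_on UNIV g"
    and bd: "\<And>x. \<bar>x\<bar> \<ge> R0 \<Longrightarrow> norm (g x) \<le> M / x^2"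
  shows "integrable lborel g"
proof -
  define R1 where "R1 = max R0 1"
  have "compact (g ` {-R1..R1})"
    by (intro compact_continuous_image continuous_on_subset[OF cont]) auto
  then obtain B where B: "\<And>x. x \<in> {-R1..R1} \<Longrightarrow> norm (g x) \<le> B"
    by (meson bounded_iff compact_imp_bounded imageI)
  define K where "K = max (B * (1 + R1^2)) (2 * M)"
  have K0: "norm (g x) \<le> K / (1 + x^2)" for x
  proof (cases "\<bar>x\<bar> \<le> R1")
    case True
    hence "x \<in> {-R1..R1}" by auto
    hence "norm (g x) \<le> B" by (rule B)
    moreover have "B \<le> B * (1 + R1^2) / (1 + x^2)" 
    proof -
      have "B \<ge> 0" using B[of x] \<open>x \<in> _\<close> norm_ge_zero order_trans by blast
      moreover have "\<bar>x\<bar> \<le> \<bar>R1\<bar>" using True R1_def by auto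
      hence "x^2 \<le> R1^2" by (simp add: abs_le_square_iff)
      ultimately show ?thesis
        by (simp add: pos_le_divide_eq add_pos_nonneg mult_left_mono)
    qed
    moreover have "B * (1 + R1^2) / (1 + x^2) \<le> K / (1 + x^2)"
      unfolding K_def by (intro divide_right_mono) (auto simp: add_pos_nonneg)
    ultimately show ?thesis by linarith
  next
    case False
    hence x1: "\<bar>x\<bar> \<ge> 1" "\<bar>x\<bar> \<ge> R0" unfolding R1_def by auto
    have "norm (g x) \<le> M / x^2" using bd x1 by auto
    have "0 \<le> M / x^2" using \<open>norm (g x) \<le> M / x^2\<close> norm_ge_zero order_trans by blast
    moreover have "x^2 > 0" using x1 by auto
    ultimately have M0: "M \<ge> 0" by (auto simp: zero_le_divide_iff)
    have "x^2 \<ge> 1" using x1 by (metis abs_le_square_iff abs_one one_power2)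
    have "M / x^2 \<le> 2 * M / (1 + x^2)"
    proof -
      have "M * 1 \<le> M * x^2" using M0 \<open>x^2 \<ge> 1\<close> by (intro mult_left_mono)
      hence "M * (1 + x^2) \<le> (2 * M) * x^2" by (simp add: algebra_simps)
      thus ?thesis using \<open>x^2 > 0\<close> by (simp add: divide_simps add_pos_nonneg)
    qed
    also have "\<dots> \<le> K / (1 + x^2)" unfolding K_def
      by (intro divide_right_mono) (auto simp: add_pos_nonneg)
    finally show ?thesis using \<open>norm (g x) \<le> M / x^2\<close> by linarith
  qed
  have K: "norm (g x) \<le> norm (K * inverse (1 + x^2))" for x
  proof -
    have "0 \<le> K / (1 + x^2)" using K0[of x] norm_ge_zero order_trans by blast
    moreover have "1 + x^2 > 0" by (simp add: add_pos_nonneg)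
    ultimately have "K \<ge> 0" by (auto simp: zero_le_divide_iff)
    thus ?thesis using K0[of x] by (simp add: abs_of_nonneg add_pos_nonneg divide_inverse)
  qed
  show ?thesis
  proof (rule Bochner_Integration.integrable_bound[OF _ _ AE_I2[OF K]])
    show "integrable lborel (\<lambda>x. K * inverse (1 + x^2))"
      using integrable_inv_1_sq by simp
    show "g \<in> borel_measurable lborel"
      using cont by (simp add: borel_measurable_continuous_onI)
  qed
qed


lemma side_bound:
  fixes G :: "complex \<Rightarrow> complex"
  assumes cont: "continuous_on (closed_segment a b) G"
    and R: "R > 0" and M0: "M \<ge> 0"
    and bd: "\<And>z. z \<in> closed_segment a b \<Longrightarrow> norm (G z) \<le> M / (norm z)^2"
    and big: "\<And>z. z \<in> closed_segment a b \<Longrightarrow> norm z \<ge> R"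
  shows "norm (contour_integral (linepath a b) G) \<le> M / R^2 * norm (b - a)"
proof (rule contour_integral_bound_linepath)
  show "G contour_integrable_on linepath a b"
    by (rule contour_integrable_continuous_linepath[OF cont])
  show "0 \<le> M / R^2" using M0 by simp
  fix z assume z: "z \<in> closed_segment a b"
  have "R^2 \<le> (norm z)^2" using big[OF z] R by (intro power_mono) auto
  moreover have "norm z > 0" using big[OF z] R by linarith
  ultimately have "M / (norm z)^2 \<le> M / R^2" using M0 R by (intro divide_left_mono) auto
  thus "norm (G z) \<le> M / R^2" using bd[OF z] by linarith
qed

lemma rect_residue_integral:
  fixes G :: "complex \<Rightarrow> complex" and S :: "complex set"
  assumes holo: "G holomorphic_on (UNIV - S)" and fin: "finite S"
    and noreal: "\<And>p. p \<in> S \<Longrightarrow> Im p \<noteq> 0" and M0: "M \<ge> 0"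
    and bd: "\<And>z. Im z \<ge> 0 \<Longrightarrow> norm z \<ge> R0 \<Longrightarrow> norm (G z) \<le> M / (norm z)^2"
  shows "integrable lborel (\<lambda>x. G (of_real x)) \<and>
    (\<integral>x. G (of_real x) \<partial>lborel) = 2*pi*\<i> * (\<Sum>p\<in>{p\<in>S. Im p > 0}. residue G p)"
proof -
  have contG: "continuous_on (UNIV - S) G" using holo holomorphic_on_imp_continuous_on by blast
  have cont: "continuous_on UNIV (\<lambda>x::real. G (of_real x))"
    by (rule continuous_on_compose2[OF contG]) (auto intro!: continuous_intros dest: noreal)
  have intg: "integrable lborel (\<lambda>x. G (of_real x))"
  proof (rule integrable_bound_sq[OF cont, of R0 M])
    fix x :: real assume "\<bar>x\<bar> \<ge> R0"
    thus "norm (G (of_real x)) \<le> M / x^2" using bd[of "of_real x"] by simp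
  qed
  define Sig where "Sig = 2*pi*\<i> * (\<Sum>p\<in>{p\<in>S. Im p > 0}. residue G p)"
  define I where "I = (\<integral>x. G (of_real x) \<partial>lborel)"
  define J where "J = (\<lambda>R::real. integral {-R..R} (\<lambda>x. G (of_real x)))"
  obtain Rs where Rs: "\<And>p. p \<in> S \<Longrightarrow> norm p < Rs"
  proof -
    obtain B where "\<forall>x\<in>S. norm x \<le> B" using finite_imp_bounded[OF fin] bounded_iff by blast
    thus ?thesis using that[of "B+1"] by force
  qed
  have key: "norm (Sig - J R) \<le> 4*M/R" if R: "R \<ge> max R0 (max 1 Rs)" for R
  proof -
    have R0: "R > 0" using R by auto
    have Sbox: "\<bar>Re p\<bar> < R \<and> \<bar>Im p\<bar> < R \<and> Im p \<noteq> 0" if "p \<in> S" for p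
      using Rs[OF that] R noreal[OF that] abs_Re_le_cmod[of p] abs_Im_le_cmod[of p] by auto
    define a1 where "a1 = - complex_of_real R"
    define a2 where "a2 = complex_of_real R"
    define a3 where "a3 = Complex R R"
    define a4 where "a4 = Complex (-R) R"
    define g where "g = rectpath a1 a3"
    have g_eq: "g = linepath a1 a2 +++ linepath a2 a3 +++ linepath a3 a4 +++ linepath a4 a1"
      unfolding g_def rectpath_def Let_def a1_def a2_def a3_def a4_def
      by (simp add: complex_of_real_def)
    have seg1: "closed_segment a1 a2 = {z. Im z = 0 \<and> Re z \<in> {-R..R}}"
      unfolding a1_def a2_def using R0 by (subst closed_segment_same_Im) (auto simp: closed_segment_eq_real_ivl)
    have seg2: "closed_segment a2 a3 = {z. Re z = R \<and> Im z \<in> {0..R}}"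
      unfolding a3_def a2_def using R0 by (subst closed_segment_same_Re) (auto simp: closed_segment_eq_real_ivl)
    have seg3: "closed_segment a3 a4 = {z. Im z = R \<and> Re z \<in> {-R..R}}"
      unfolding a3_def a4_def using R0 by (subst closed_segment_same_Im) (auto simp: closed_segment_eq_real_ivl)
    have seg4: "closed_segment a4 a1 = {z. Re z = -R \<and> Im z \<in> {0..R}}"
      unfolding a1_def a4_def using R0 by (subst closed_segment_same_Re) (auto simp: closed_segment_eq_real_ivl)
    have disj: "closed_segment a1 a2 \<subseteq> UNIV - S" "closed_segment a2 a3 \<subseteq> UNIV - S"
       "closed_segment a3 a4 \<subseteq> UNIV - S" "closed_segment a4 a1 \<subseteq> UNIV - S"
      unfolding seg1 seg2 seg3 seg4 using Sbox by force+
    have ci: "G contour_integrable_on linepath a1 a2" "G contour_integrable_on linepath a2 a3"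
       "G contour_integrable_on linepath a3 a4" "G contour_integrable_on linepath a4 a1"
      using disj by (auto intro!: contour_integrable_continuous_linepath continuous_on_subset[OF contG])
    have split: "contour_integral g G = contour_integral (linepath a1 a2) G + 
       (contour_integral (linepath a2 a3) G + contour_integral (linepath a3 a4) G
         + contour_integral (linepath a4 a1) G)"
      unfolding g_eq using ci
      by (simp add: contour_integral_join contour_integrable_joinI valid_path_join add.assoc)
    have bottom: "contour_integral (linepath a1 a2) G = J R"
      unfolding J_def a1_def a2_def using R0
      by (subst contour_integral_linepath_Reals_eq) auto
    have b2: "norm (contour_integral (linepath a2 a3) G) \<le> M / R^2 * R"
    proof -
      have "norm (contour_integral (linepath a2 a3) G) \<le> M / R^2 * norm (a3 - a2)"
      proof (rule side_bound[OF _ R0 M0])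
        show "continuous_on (closed_segment a2 a3) G" using disj by (auto intro: continuous_on_subset[OF contG])
        fix z assume "z \<in> closed_segment a2 a3"
        hence z: "Re z = R" "Im z \<ge> 0" unfolding seg2 by auto
        thus "norm z \<ge> R" using abs_Re_le_cmod[of z] by auto
        thus "norm (G z) \<le> M / (norm z)^2" using z R by (intro bd) auto
      qed
      moreover have "norm (a3 - a2) = R" unfolding a3_def a2_def using R0 by (simp add: cmod_def complex_of_real_def)
      ultimately show ?thesis by simp
    qed
    have b3: "norm (contour_integral (linepath a3 a4) G) \<le> M / R^2 * (2*R)"
    proof -
      have "norm (contour_integral (linepath a3 a4) G) \<le> M / R^2 * norm (a4 - a3)"
      proof (rule side_bound[OF _ R0 M0])
        show "continuous_on (closed_segment a3 a4) G" using disj by (auto intro: continuous_on_subset[OF contG])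
        fix z assume "z \<in> closed_segment a3 a4"
        hence z: "Im z = R" unfolding seg3 by auto
        thus "norm z \<ge> R" using abs_Im_le_cmod[of z] by auto
        thus "norm (G z) \<le> M / (norm z)^2" using z R by (intro bd) auto
      qed
      moreover have "norm (a4 - a3) = 2*R" unfolding a3_def a4_def using R0 by (simp add: cmod_def real_sqrt_mult)
      ultimately show ?thesis by simp
    qed
    have b4: "norm (contour_integral (linepath a4 a1) G) \<le> M / R^2 * R"
    proof -
      have "norm (contour_integral (linepath a4 a1) G) \<le> M / R^2 * norm (a1 - a4)"
      proof (rule side_bound[OF _ R0 M0])
        show "continuous_on (closed_segment a4 a1) G" using disj by (auto intro: continuous_on_subset[OF contG])
        fix z assume "z \<in> closed_segment a4 a1"
        hence z: "Re z = -R" "Im z \<ge> 0" unfolding seg4 by auto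
        thus "norm z \<ge> R" using abs_Re_le_cmod[of z] by auto
        thus "norm (G z) \<le> M / (norm z)^2" using z R by (intro bd) auto
      qed
      moreover have "norm (a1 - a4) = R" unfolding a1_def a4_def using R0 by (simp add: cmod_def complex_of_real_def)
      ultimately show ?thesis by simp
    qed
    have pimg: "path_image g \<subseteq> UNIV - S"
    proof -
      have "path_image g = cbox a1 a3 - box a1 a3" unfolding g_def
        by (rule path_image_rectpath_cbox_minus_box) (use R0 in \<open>auto simp: a1_def a3_def\<close>)
      moreover have "p \<notin> cbox a1 a3 - box a1 a3" if "p \<in> S" for p
        using Sbox[OF that] by (auto simp: in_box_complex_iff in_cbox_complex_iff a1_def a3_def)
      ultimately show ?thesis by blast
    qed
    have wn: "winding_number g p = (if Im p > 0 then 1 else 0)" if "p \<in> S" for p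
    proof (cases "Im p > 0")
      case True
      hence "p \<in> box a1 a3" using Sbox[OF that] unfolding in_box_complex_iff a1_def a3_def by auto
      thus ?thesis using True unfolding g_def by (simp add: winding_number_rectpath)
    next
      case False
      hence "p \<notin> cbox a1 a3" using Sbox[OF that] unfolding in_cbox_complex_iff a1_def a3_def by auto
      thus ?thesis using False R0 unfolding g_def
        by (subst winding_number_rectpath_outside) (auto simp: a1_def a3_def)
    qed
    have "contour_integral g G = 2 * pi * \<i> * (\<Sum>p\<in>S. winding_number g p * residue G p)"
      by (rule Residue_theorem[OF open_UNIV connected_UNIV fin holo]) (use pimg in \<open>auto simp: g_def\<close>)
    also have "(\<Sum>p\<in>S. winding_number g p * residue G p) = (\<Sum>p\<in>S. if Im p > 0 then residue G p else 0)"
      by (intro sum.cong) (auto simp: wn)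
    also have "\<dots> = (\<Sum>p\<in>{p\<in>S. Im p > 0}. residue G p)"
      using fin by (simp add: sum.inter_filter)
    finally have "Sig = contour_integral g G" unfolding Sig_def by simp
    hence "Sig - J R = contour_integral (linepath a2 a3) G + contour_integral (linepath a3 a4) G
         + contour_integral (linepath a4 a1) G" using split bottom by simp
    hence "norm (Sig - J R) \<le> M / R^2 * R + M / R^2 * (2*R) + M / R^2 * R"
      using b2 b3 b4 norm_triangle_le[OF add_mono] by (smt (verit) norm_triangle_ineq)
    also have "\<dots> = 4 * M / R" using R0 by (simp add: field_simps power2_eq_square)
    finally show ?thesis .
  qed
  have lim1: "(\<lambda>k. J (real k)) \<longlonglongrightarrow> I"
  proof -
    have si: "set_integrable lborel A (\<lambda>x. G (of_real x))" if "A \<in> sets lborel" for A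
      unfolding set_integrable_def using that intg by (rule integrable_mult_indicator)
    have "(\<lambda>k. set_lebesgue_integral lborel {-real k..real k} (\<lambda>x. G (of_real x)))
        \<longlonglongrightarrow> set_lebesgue_integral lborel (\<Union>k. {-real k..real k}) (\<lambda>x. G (of_real x))"
      by (rule set_integral_cont_up) (auto simp: incseq_def intro!: si)
    moreover have "(\<Union>k. {-real k..real k}) = UNIV"
    proof -
      have "x \<in> (\<Union>k. {-real k..real k})" for x
      proof -
        obtain k where "\<bar>x\<bar> \<le> real k" using real_arch_simple by blast
        hence "x \<in> {-real k..real k}" by auto
        thus ?thesis by blast
      qed
      thus ?thesis by blast
    qed
    moreover have "set_lebesgue_integral lborel {-real k..real k} (\<lambda>x. G (of_real x)) = J (real k)" for k
      unfolding J_def by (rule set_borel_integral_eq_integral(2)[OF si]) simp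
    ultimately show ?thesis by (simp add: I_def set_lebesgue_integral_def)
  qed
  have lim2: "(\<lambda>k. J (real k)) \<longlonglongrightarrow> Sig"
  proof -
    have lim0: "(\<lambda>k. 4 * M / real k) \<longlonglongrightarrow> 0"
      by (intro tendsto_divide_0[OF tendsto_const] filterlim_at_top_imp_at_infinity[OF filterlim_real_sequentially])
    have ev: "eventually (\<lambda>k. norm (J (real k) - Sig) \<le> 4 * M / real k) sequentially"
    proof -
      obtain N :: nat where N: "real N \<ge> max R0 (max 1 Rs)" using real_arch_simple by blast
      show ?thesis
      proof (rule eventually_sequentiallyI[of N])
        fix k assume "k \<ge> N"
        hence "real k \<ge> max R0 (max 1 Rs)" using N by (meson of_nat_le_iff order_trans)
        from key[OF this] show "norm (J (real k) - Sig) \<le> 4 * M / real k" by (simp add: norm_minus_commute)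
      qed
    qed
    have "(\<lambda>k. J (real k) - Sig) \<longlonglongrightarrow> 0"
      by (rule Lim_null_comparison[OF ev lim0])
    thus ?thesis by (simp add: LIM_zero_iff)
  qed
  have "I = Sig" using LIMSEQ_unique[OF lim1 lim2] .
  thus ?thesis using intg unfolding I_def Sig_def by simp
qed

lemma hinv_eq: "hinv x y = 2 * pi * (cosh y - cos x) / sinh y"
  unfolding hinv_def hh_def by (simp add: field_simps)

lemma deriv_lor_x:
  fixes c y :: real
  assumes "y \<noteq> 0"
  shows "((\<lambda>t. (1 / pi) * (y / ((t - c)^2 + y^2))) has_real_derivative
      - (2 / pi) * y * (x - c) / ((x - c)^2 + y^2)^2) (at x)"
proof -
  have nz: "(x - c)^2 + y^2 \<noteq> 0" using assms by (simp add: add_nonneg_eq_0_iff)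
  show ?thesis
    using nz by (auto intro!: derivative_eq_intros simp: divide_simps power2_eq_square)
qed

lemma deriv_lor_y:
  fixes c x :: real
  assumes "y \<noteq> 0"
  shows "((\<lambda>t. (1 / pi) * (t / ((x - c)^2 + t^2))) has_real_derivative
      (1 / pi) * ((x - c)^2 - y^2) / ((x - c)^2 + y^2)^2) (at y)"
proof -
  have nz: "(x - c)^2 + y^2 \<noteq> 0" using assms by (simp add: add_nonneg_eq_0_iff)
  have "((\<lambda>t. t / ((x - c)^2 + t^2)) has_real_derivative ((x - c)^2 - y^2) / ((x - c)^2 + y^2)^2) (at y)"
    using nz by (auto intro!: derivative_eq_intros simp: divide_simps power2_eq_square algebra_simps)
  from DERIV_cmult[OF this, of "1/pi"] show ?thesis by simp
qed

lemma dx_pk: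
  assumes "y \<noteq> 0"
  shows "dx (pk k) x y = - (2 / pi) * y * (x - 2 * pi * of_int k) / ((x - 2 * pi * of_int k)^2 + y^2)^2"
  unfolding dx_def pk_def by (rule DERIV_imp_deriv[OF deriv_lor_x[OF assms]])

lemma dy_pk:
  assumes "y \<noteq> 0"
  shows "dy (pk k) x y = (1 / pi) * ((x - 2 * pi * of_int k)^2 - y^2) / ((x - 2 * pi * of_int k)^2 + y^2)^2"
  unfolding dy_def pk_def by (rule DERIV_imp_deriv[OF deriv_lor_y[OF assms]])

lemma dx_hinv:
  assumes "y \<noteq> 0"
  shows "dx hinv x y = 2 * pi * sin x / sinh y"
proof -
  have "((\<lambda>t. 2 * pi * (cosh y - cos t) / sinh y) has_real_derivative 2 * pi * sin x / sinh y) (at x)"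
    using assms by (auto intro!: derivative_eq_intros)
  thus ?thesis unfolding dx_def hinv_eq by (rule DERIV_imp_deriv)
qed

lemma dy_hinv:
  assumes "y \<noteq> 0"
  shows "dy hinv x y = 2 * pi * (cosh y * cos x - 1) / (sinh y)^2"
proof -
  have s: "sinh y \<noteq> 0" using assms by simp
  have cc: "cosh y * cosh y = 1 + sinh y * sinh y" using cosh_square_eq[of y] by (simp add: power2_eq_square)
  have num: "sinh y * sinh y - (cosh y - cos x) * cosh y = cosh y * cos x - 1" using cc by algebra
  have "((\<lambda>t. 2 * pi * (cosh t - cos x) / sinh t) has_real_derivative 
        2 * pi * (sinh y * sinh y - (cosh y - cos x) * cosh y) / (sinh y * sinh y)) (at y)"
    using s by (auto intro!: derivative_eq_intros simp: divide_simps power2_eq_square algebra_simps)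
  hence "((\<lambda>t. 2 * pi * (cosh t - cos x) / sinh t) has_real_derivative 
        2 * pi * (cosh y * cos x - 1) / (sinh y)^2) (at y)" by (simp only: num power2_eq_square)
  thus ?thesis unfolding dy_def hinv_eq by (rule DERIV_imp_deriv)
qed

definition rinv :: "complex \<Rightarrow> complex \<Rightarrow> complex" where "rinv a z = 1 / (z - a)"

definition Pc :: "real \<Rightarrow> real \<Rightarrow> complex \<Rightarrow> complex" where
  "Pc c y z = (rinv (of_real c + \<i> * of_real y) z - rinv (of_real c - \<i> * of_real y) z) / (2 * pi * \<i>)"
definition Pxc :: "real \<Rightarrow> real \<Rightarrow> complex \<Rightarrow> complex" where
  "Pxc c y z = - \<i> * ((rinv (of_real c - \<i> * of_real y) z)^2 - (rinv (of_real c + \<i> * of_real y) z)^2) / (2 * pi)"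
definition Pyc :: "real \<Rightarrow> real \<Rightarrow> complex \<Rightarrow> complex" where
  "Pyc c y z = ((rinv (of_real c - \<i> * of_real y) z)^2 + (rinv (of_real c + \<i> * of_real y) z)^2) / (2 * pi)"

lemma inv_cpx:
  fixes u y D :: real assumes "y \<noteq> 0" and D: "D = u^2 + y^2"
  shows "1 / (complex_of_real u + \<i> * complex_of_real y) = (complex_of_real u - \<i> * complex_of_real y) / complex_of_real D"
    "1 / (complex_of_real u - \<i> * complex_of_real y) = (complex_of_real u + \<i> * complex_of_real y) / complex_of_real D"
proof -
  have "u^2 + y^2 \<noteq> 0" using assms by (simp add: add_nonneg_eq_0_iff)
  have nz: "complex_of_real u + \<i> * complex_of_real y \<noteq> 0" "complex_of_real u - \<i> * complex_of_real y \<noteq> 0"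
    using assms by (auto simp: complex_eq_iff)
  have D': "(complex_of_real u)^2 + (complex_of_real y)^2 \<noteq> 0" using \<open>u^2 + y^2 \<noteq> 0\<close> by (metis of_real_add of_real_power of_real_eq_0_iff)
  show "1 / (complex_of_real u + \<i> * complex_of_real y) = (complex_of_real u - \<i> * complex_of_real y) / complex_of_real D"
    using nz D' unfolding D by (simp add: divide_simps) (simp add: algebra_simps power2_eq_square)
  show "1 / (complex_of_real u - \<i> * complex_of_real y) = (complex_of_real u + \<i> * complex_of_real y) / complex_of_real D"
    using nz D' unfolding D by (simp add: divide_simps) (simp add: algebra_simps power2_eq_square)
qed

lemma rinv_real:
  fixes c y x :: real
  shows "rinv (of_real c + \<i> * of_real y) (of_real x) = 1 / (of_real (x - c) - \<i> * of_real y)"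
    "rinv (of_real c - \<i> * of_real y) (of_real x) = 1 / (of_real (x - c) + \<i> * of_real y)"
  by (simp_all add: rinv_def algebra_simps)

lemma Pc_real:
  fixes c y x :: real assumes "y \<noteq> 0"
  shows "Pc c y (of_real x) = of_real ((1 / pi) * (y / ((x - c)^2 + y^2)))"
proof -
  define D where "D = (x - c)^2 + y^2"
  have Dnz: "D \<noteq> 0" using assms by (simp add: add_nonneg_eq_0_iff D_def)
  note iv = inv_cpx[OF assms D_def]
  show ?thesis unfolding Pc_def rinv_real iv D_def[symmetric] using Dnz
    by (simp add: field_simps)
qed

lemma Pxc_real:
  fixes c y x :: real assumes "y \<noteq> 0"
  shows "Pxc c y (of_real x) = of_real (- (2 / pi) * y * (x - c) / ((x - c)^2 + y^2)^2)"
proof -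
  define D where "D = (x - c)^2 + y^2"
  have Dnz: "D \<noteq> 0" using assms by (simp add: add_nonneg_eq_0_iff D_def)
  note iv = inv_cpx[OF assms D_def]
  show ?thesis unfolding Pxc_def rinv_real iv D_def[symmetric] using Dnz
    by (simp add: field_simps) (simp add: algebra_simps power2_eq_square)
qed

lemma Pyc_real:
  fixes c y x :: real assumes "y \<noteq> 0"
  shows "Pyc c y (of_real x) = of_real ((1 / pi) * ((x - c)^2 - y^2) / ((x - c)^2 + y^2)^2)"
proof -
  define D where "D = (x - c)^2 + y^2"
  have Dnz: "D \<noteq> 0" using assms by (simp add: add_nonneg_eq_0_iff D_def)
  note iv = inv_cpx[OF assms D_def]
  show ?thesis unfolding Pyc_def rinv_real iv D_def[symmetric] using Dnz
    by (simp add: field_simps) (simp add: algebra_simps power2_eq_square)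
qed

definition G1 :: "real \<Rightarrow> real \<Rightarrow> complex \<Rightarrow> complex" where
  "G1 c y z = of_real (2 * pi / sinh y) * (of_real (cosh y) - exp (\<i> * z)) *
     (- Pyc 0 y z * Pxc c y z + Pxc 0 y z * Pyc c y z)"

definition G2 :: "real \<Rightarrow> real \<Rightarrow> complex \<Rightarrow> complex" where
  "G2 c y z = Pc c y z * (- Pyc 0 y z * of_real (2 * pi / sinh y) * (- \<i> * exp (\<i> * z))
     + Pxc 0 y z * (of_real (2 * pi / (sinh y)^2) * (of_real (cosh y) * exp (\<i> * z) - 1)))"

lemma Re_exp_ix: "Re (exp (\<i> * complex_of_real x)) = cos x" "Re (- \<i> * exp (\<i> * complex_of_real x)) = sin x"
  by (simp_all add: Re_exp Im_exp)

lemma I1_eq: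
  assumes "y \<noteq> 0"
  shows "hinv x y * Hgrad_dot (pk 0) (pk n) x y = Re (G1 (2 * pi * of_int n) y (of_real x))"
proof -
  have a: "Pxc 0 y (of_real x) = of_real (dx (pk 0) x y)" using Pxc_real[OF assms, of 0 x] dx_pk[OF assms, of 0 x] by simp
  have b: "Pyc 0 y (of_real x) = of_real (dy (pk 0) x y)" using Pyc_real[OF assms, of 0 x] dy_pk[OF assms, of 0 x] by simp
  have c: "Pxc (2 * pi * of_int n) y (of_real x) = of_real (dx (pk n) x y)" using Pxc_real[OF assms] dx_pk[OF assms] by simp
  have d: "Pyc (2 * pi * of_int n) y (of_real x) = of_real (dy (pk n) x y)" using Pyc_real[OF assms] dy_pk[OF assms] by simp
  have s: "sinh y \<noteq> 0" using assms by simp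
  show ?thesis unfolding G1_def a b c d Hgrad_dot_def hinv_eq
    using s by (simp add: Re_exp Im_exp field_simps)
qed

lemma I2_eq:
  assumes "y \<noteq> 0"
  shows "pk n x y * Hgrad_dot (pk 0) hinv x y = Re (G2 (2 * pi * of_int n) y (of_real x))"
proof -
  have a: "Pxc 0 y (of_real x) = of_real (dx (pk 0) x y)" using Pxc_real[OF assms, of 0 x] dx_pk[OF assms, of 0 x] by simp
  have b: "Pyc 0 y (of_real x) = of_real (dy (pk 0) x y)" using Pyc_real[OF assms, of 0 x] dy_pk[OF assms, of 0 x] by simp
  have c: "Pc (2 * pi * of_int n) y (of_real x) = of_real (pk n x y)" using Pc_real[OF assms] unfolding pk_def by simp
  show ?thesis unfolding G2_def a b c Hgrad_dot_def dx_hinv[OF assms] dy_hinv[OF assms]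
    by (simp add: Re_exp Im_exp algebra_simps)
qed

definition Sset :: "real \<Rightarrow> real \<Rightarrow> complex set" where
  "Sset c y = {of_real c + \<i> * of_real y, of_real c - \<i> * of_real y, \<i> * of_real y, - \<i> * of_real y}"

lemma G1_holo: "G1 c y holomorphic_on (UNIV - Sset c y)"
  unfolding G1_def Pxc_def Pyc_def rinv_def Sset_def
  by (auto intro!: holomorphic_intros simp: add_eq_0_iff2)

lemma G2_holo: "G2 c y holomorphic_on (UNIV - Sset c y)"
  unfolding G2_def Pc_def Pxc_def Pyc_def rinv_def Sset_def
  by (auto intro!: holomorphic_intros simp: add_eq_0_iff2)

lemma rinv_bound:
  assumes "norm z \<ge> 2 * norm a" "norm z > 0"
  shows "norm (rinv a z) \<le> 2 / norm z"
proof -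
  have "norm (z - a) \<ge> norm z - norm a" by (rule norm_triangle_ineq2)
  hence h: "norm (z - a) \<ge> norm z / 2" using assms by linarith
  hence "norm (z - a) > 0" using assms by linarith
  thus ?thesis unfolding rinv_def using h assms
    by (simp add: norm_divide divide_simps)
qed

lemma P_bounds:
  fixes c y :: real
  assumes z: "norm z \<ge> 2 * (\<bar>c\<bar> + \<bar>y\<bar>)" "norm z \<ge> 2"
  shows "norm (Pc c y z) \<le> 2 / norm z" "norm (Pxc c y z) \<le> (2 / norm z)^2" "norm (Pyc c y z) \<le> (2 / norm z)^2"
proof -
  define t where "t = 2 / norm z"
  have t0: "t \<ge> 0" unfolding t_def by simp
  have npm: "norm (of_real c + \<i> * of_real y) \<le> \<bar>c\<bar> + \<bar>y\<bar>" "norm (of_real c - \<i> * of_real y) \<le> \<bar>c\<bar> + \<bar>y\<bar>"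
    using norm_triangle_ineq[of "of_real c" "\<i> * of_real y"] norm_triangle_ineq4[of "of_real c" "\<i> * of_real y"]
    by (auto simp: norm_mult)
  have r1: "norm (rinv (of_real c + \<i> * of_real y) z) \<le> t" unfolding t_def
    using z npm by (intro rinv_bound) auto
  have r2: "norm (rinv (of_real c - \<i> * of_real y) z) \<le> t" unfolding t_def
    using z npm by (intro rinv_bound) auto
  have pi1: "pi \<ge> 1" using pi_gt3 by linarith
  have tp: "t \<le> t * pi" "t^2 \<le> t^2 * pi" using mult_left_mono[OF pi1, of t] mult_left_mono[OF pi1, of "t^2"] t0 by auto
  have "norm (Pc c y z) = norm (rinv (of_real c + \<i> * of_real y) z - rinv (of_real c - \<i> * of_real y) z) / (2 * pi)"
    unfolding Pc_def by (simp add: norm_divide norm_mult)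
  also have "\<dots> \<le> (t + t) / (2 * pi)"
    by (intro divide_right_mono order_trans[OF norm_triangle_ineq4 add_mono[OF r1 r2]]) simp
  also have "\<dots> \<le> t" using t0 pi1 tp by (simp add: divide_simps)
  finally show "norm (Pc c y z) \<le> 2 / norm z" unfolding t_def .
  have sq1: "norm ((rinv (of_real c + \<i> * of_real y) z)^2) \<le> t^2" using r1 by (simp add: norm_power power_mono)
  have sq2: "norm ((rinv (of_real c - \<i> * of_real y) z)^2) \<le> t^2" using r2 by (simp add: norm_power power_mono)
  have "norm (Pxc c y z) = norm ((rinv (of_real c - \<i> * of_real y) z)^2 - (rinv (of_real c + \<i> * of_real y) z)^2) / (2 * pi)"
    unfolding Pxc_def by (simp add: norm_divide norm_mult)
  also have "\<dots> \<le> (t^2 + t^2) / (2 * pi)"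
    by (intro divide_right_mono order_trans[OF norm_triangle_ineq4 add_mono[OF sq2 sq1]]) simp
  also have "\<dots> \<le> t^2" using t0 pi1 tp by (simp add: divide_simps)
  finally show "norm (Pxc c y z) \<le> (2 / norm z)^2" unfolding t_def .
  have "norm (Pyc c y z) = norm ((rinv (of_real c - \<i> * of_real y) z)^2 + (rinv (of_real c + \<i> * of_real y) z)^2) / (2 * pi)"
    unfolding Pyc_def by (simp add: norm_divide norm_mult)
  also have "\<dots> \<le> (t^2 + t^2) / (2 * pi)"
    by (intro divide_right_mono order_trans[OF norm_triangle_ineq add_mono[OF sq2 sq1]]) simp
  also have "\<dots> \<le> t^2" using t0 pi1 tp by (simp add: divide_simps)
  finally show "norm (Pyc c y z) \<le> (2 / norm z)^2" unfolding t_def .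
qed

lemma exp_iz_bound: "Im z \<ge> 0 \<Longrightarrow> norm (exp (\<i> * z)) \<le> 1"
  by (simp add: norm_exp_eq_Re)

lemma G1_bound:
  fixes c y :: real
  assumes Iz: "Im z \<ge> 0" and z: "norm z \<ge> 2 * (\<bar>c\<bar> + \<bar>y\<bar>) + 2"
  shows "norm (G1 c y z) \<le> (\<bar>2 * pi / sinh y\<bar> * (\<bar>cosh y\<bar> + 1) * 8) / (norm z)^2"
proof -
  define t where "t = 2 / norm z"
  have nz: "norm z > 0" using z by (smt (verit) abs_ge_zero)
  have t0: "t \<ge> 0" "t \<le> 1" unfolding t_def using z nz by (auto simp: divide_simps)
  have z1: "norm z \<ge> 2 * (\<bar>c\<bar> + \<bar>y\<bar>)" "norm z \<ge> 2" "norm z \<ge> 2 * (\<bar>0\<bar> + \<bar>y\<bar>)" using z by auto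
  note Pb = P_bounds[OF z1(1,2), folded t_def] P_bounds[OF z1(3,2), folded t_def]
  have "t^2 \<le> 1" using t0 by (simp add: power_le_one)
  hence tt: "t^2 * t^2 \<le> t^2" using mult_right_le_one_le[of "t^2" "t^2"] by simp
  have b: "norm (- Pyc 0 y z * Pxc c y z + Pxc 0 y z * Pyc c y z) \<le> 2 * t^2"
  proof -
    have "norm (- Pyc 0 y z * Pxc c y z + Pxc 0 y z * Pyc c y z) \<le> 
      norm (Pyc 0 y z) * norm (Pxc c y z) + norm (Pxc 0 y z) * norm (Pyc c y z)"
      by (rule order_trans[OF norm_triangle_ineq]) (simp add: norm_mult)
    also have "\<dots> \<le> t^2 * t^2 + t^2 * t^2"
      using Pb by (intro add_mono mult_mono) auto
    also have "\<dots> \<le> 2 * t^2" using tt by simp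
    finally show ?thesis .
  qed
  have ex1: "exp (- Im z) \<le> 1" using Iz by simp
  have e: "norm (of_real (cosh y) - exp (\<i> * z)) \<le> \<bar>cosh y\<bar> + 1"
  proof -
    have "norm (of_real (cosh y) - exp (\<i> * z)) \<le> \<bar>cosh y\<bar> + exp (- Im z)"
      using norm_triangle_ineq4[of "of_real (cosh y)" "exp (\<i> * z)"] by (simp add: norm_exp_eq_Re)
    thus ?thesis using ex1 by linarith
  qed
  have "norm (G1 c y z) = \<bar>2 * pi / sinh y\<bar> * norm (of_real (cosh y) - exp (\<i> * z)) *
      norm (- Pyc 0 y z * Pxc c y z + Pxc 0 y z * Pyc c y z)"
    unfolding G1_def norm_mult norm_of_real by simp
  also have "\<dots> \<le> \<bar>2 * pi / sinh y\<bar> * (\<bar>cosh y\<bar> + 1) * (2 * t^2)"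
    using e b by (intro mult_mono) auto
  also have "\<dots> = (\<bar>2 * pi / sinh y\<bar> * (\<bar>cosh y\<bar> + 1) * 8) / (norm z)^2"
    unfolding t_def by (simp add: power2_eq_square)
  finally show ?thesis .
qed

lemma G2_bound:
  fixes c y :: real
  assumes Iz: "Im z \<ge> 0" and z: "norm z \<ge> 2 * (\<bar>c\<bar> + \<bar>y\<bar>) + 2"
  shows "norm (G2 c y z) \<le> ((\<bar>2 * pi / sinh y\<bar> + \<bar>2 * pi / (sinh y)^2\<bar> * (\<bar>cosh y\<bar> + 1)) * 4) / (norm z)^2"
proof -
  define t where "t = 2 / norm z"
  have nz: "norm z > 0" using z by (smt (verit) abs_ge_zero)
  have t0: "t \<ge> 0" "t \<le> 1" unfolding t_def using z nz by (auto simp: divide_simps)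
  have z1: "norm z \<ge> 2 * (\<bar>c\<bar> + \<bar>y\<bar>)" "norm z \<ge> 2" "norm z \<ge> 2 * (\<bar>0\<bar> + \<bar>y\<bar>)" using z by auto
  note Pb = P_bounds[OF z1(1,2), folded t_def] P_bounds[OF z1(3,2), folded t_def]
  have tt: "t * t^2 \<le> t^2" using t0 by (simp add: mult_left_le_one_le)
  define K1 where "K1 = \<bar>2 * pi / sinh y\<bar>"
  define K2 where "K2 = \<bar>2 * pi / (sinh y)^2\<bar> * (\<bar>cosh y\<bar> + 1)"
  have E1: "norm (exp (\<i> * z)) \<le> 1" by (rule exp_iz_bound[OF Iz])
  have e2: "norm (of_real (cosh y) * exp (\<i> * z) - 1) \<le> \<bar>cosh y\<bar> + 1"
    using norm_triangle_ineq4[of "of_real (cosh y) * exp (\<i> * z)" 1] E1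
    by (smt (verit) norm_mult norm_of_real mult_left_le abs_ge_zero norm_one)
  have i1: "norm (- Pyc 0 y z * of_real (2 * pi / sinh y) * (- \<i> * exp (\<i> * z))) \<le> t^2 * K1"
  proof -
    have "norm (- Pyc 0 y z * of_real (2 * pi / sinh y) * (- \<i> * exp (\<i> * z))) =
      norm (Pyc 0 y z) * K1 * norm (exp (\<i> * z))" unfolding K1_def norm_mult norm_minus_cancel norm_of_real by simp
    also have "\<dots> \<le> t^2 * K1 * 1" using Pb E1 unfolding K1_def by (intro mult_mono) auto
    finally show ?thesis by simp
  qed
  have i2: "norm (Pxc 0 y z * (of_real (2 * pi / (sinh y)^2) * (of_real (cosh y) * exp (\<i> * z) - 1))) \<le> t^2 * K2"
  proof -
    have "norm (Pxc 0 y z * (of_real (2 * pi / (sinh y)^2) * (of_real (cosh y) * exp (\<i> * z) - 1))) =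
      norm (Pxc 0 y z) * (\<bar>2 * pi / (sinh y)^2\<bar> * norm (of_real (cosh y) * exp (\<i> * z) - 1))"
      unfolding norm_mult norm_of_real by simp
    also have "\<dots> \<le> t^2 * K2" using Pb e2 unfolding K2_def by (intro mult_mono) auto
    finally show ?thesis .
  qed
  have "norm (G2 c y z) \<le> norm (Pc c y z) * (t^2 * K1 + t^2 * K2)"
    unfolding G2_def norm_mult
    by (intro mult_left_mono order_trans[OF norm_triangle_ineq add_mono[OF i1 i2]]) auto
  also have "\<dots> \<le> t * (t^2 * K1 + t^2 * K2)"
    using Pb by (intro mult_right_mono) (auto simp: K1_def K2_def)
  also have "\<dots> = (t * t^2) * (K1 + K2)" by (simp add: algebra_simps)
  also have "\<dots> \<le> t^2 * (K1 + K2)" using tt by (intro mult_right_mono) (auto simp: K1_def K2_def)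
  also have "\<dots> \<le> ((K1 + K2) * 4) / (norm z)^2"
    unfolding t_def by (simp add: power2_eq_square K1_def K2_def)
  finally show ?thesis unfolding K1_def K2_def by simp
qed

lemma rinv_deriv [derivative_intros]:
  assumes "(f has_field_derivative Df) (at z within T)" "f z \<noteq> a"
  shows "((\<lambda>w. rinv a (f w)) has_field_derivative (- (rinv a (f z) * rinv a (f z)) * Df)) (at z within T)"
  unfolding rinv_def using assms
  by (auto intro!: derivative_eq_intros simp: power2_eq_square divide_simps)

lemma rinv_holo [holomorphic_intros]:
  assumes "f holomorphic_on T" "\<And>z. z \<in> T \<Longrightarrow> f z \<noteq> a"
  shows "(\<lambda>w. rinv a (f w)) holomorphic_on T"
  unfolding rinv_def using assms by (auto intro!: holomorphic_intros)

definition GG :: "real \<Rightarrow> real \<Rightarrow> complex \<Rightarrow> complex" where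
  "GG c y z = G1 c y z + 2 * G2 c y z"

definition Gform :: "complex \<Rightarrow> complex \<Rightarrow> complex \<Rightarrow> complex \<Rightarrow> complex \<Rightarrow> complex \<Rightarrow> complex \<Rightarrow> complex \<Rightarrow> complex" where
  "Gform p s C E A Ab B Bb =
    (2 * p / s) * (C - E) * (- ((A^2 + Ab^2) / (2 * p)) * (- \<i> * (Bb^2 - B^2) / (2 * p))
       + (- \<i> * (A^2 - Ab^2) / (2 * p)) * ((Bb^2 + B^2) / (2 * p)))
    + 2 * ((B - Bb) / (2 * p * \<i>) * (- ((A^2 + Ab^2) / (2 * p)) * (2 * p / s) * (- \<i> * E)
       + (- \<i> * (A^2 - Ab^2) / (2 * p)) * ((2 * p / s^2) * (C * E - 1))))"

lemma GG_alt:
  "GG c y z = Gform (of_real pi) (of_real (sinh y)) (of_real (cosh y)) (exp (\<i> * z))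
     (rinv (- (\<i> * of_real y)) z) (rinv (\<i> * of_real y) z)
     (rinv (of_real c + \<i> * of_real y) z) (rinv (of_real c - \<i> * of_real y) z)"
  unfolding GG_def G1_def G2_def Gform_def Pc_def Pxc_def Pyc_def by simp

lemma Gform_decomp1:
  assumes "s \<noteq> 0" "p \<noteq> 0"
  shows "Gform p s C E A Ab B Bb = Ab^2 * (\<i> / (p * s) * (C - E) * Bb^2
        + 1 / (p * s) * (B - Bb) * (E + (C * E - 1) / s))
      + (- (\<i> / (p * s)) * (C - E) * A^2 * B^2
        + 1 / (p * s) * (B - Bb) * A^2 * (E - (C * E - 1) / s))"
  unfolding Gform_def using assms by (simp add: field_simps) (simp add: algebra_simps power2_eq_square)

lemma Gform_decomp2:
  assumes "s \<noteq> 0" "p \<noteq> 0"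
  shows "Gform p s C E A Ab B Bb = B^2 * (- (\<i> / (p * s)) * (C - E) * A^2)
      + B * (1 / (p * s) * ((A^2 + Ab^2) * E - (A^2 - Ab^2) * (C * E - 1) / s))
      + (\<i> / (p * s) * (C - E) * Ab^2 * Bb^2
        - 1 / (p * s) * Bb * ((A^2 + Ab^2) * E - (A^2 - Ab^2) * (C * E - 1) / s))"
  unfolding Gform_def using assms by (simp add: field_simps) (simp add: algebra_simps power2_eq_square)

lemma residue_at_iy:
  fixes c y :: real
  assumes y: "y > 0" and c: "c \<noteq> 0"
  defines "p \<equiv> complex_of_real pi" and "s \<equiv> complex_of_real (sinh y)" and "C \<equiv> complex_of_real (cosh y)"
    and "yi \<equiv> \<i> * complex_of_real y"
  defines "B \<equiv> rinv (of_real c + yi)" and "Bb \<equiv> rinv (of_real c - yi)"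
  defines "g2 \<equiv> (\<lambda>z. \<i> / (p * s) * (C - exp (\<i> * z)) * (Bb z)^2
        + 1 / (p * s) * (B z - Bb z) * (exp (\<i> * z) + (C * exp (\<i> * z) - 1) / s))"
  shows "residue (GG c y) yi =
     \<i> / (p * s) * ((- (\<i> * exp (\<i> * yi))) * (Bb yi)^2 + (C - exp (\<i> * yi)) * (2 * Bb yi * (- (Bb yi * Bb yi))))
     + 1 / (p * s) * ((- (B yi * B yi) + Bb yi * Bb yi) * (exp (\<i> * yi) + (C * exp (\<i> * yi) - 1) / s)
          + (B yi - Bb yi) * (\<i> * exp (\<i> * yi) + C * (\<i> * exp (\<i> * yi)) / s))"
    (is "_ = ?rhs")
proof -
  have s0: "s \<noteq> 0" using y unfolding s_def by simp
  have p0: "p \<noteq> 0" unfolding p_def by simp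
  define g0 where "g0 = (\<lambda>z. - (\<i> / (p * s)) * (C - exp (\<i> * z)) * (rinv (- yi) z)^2 * (B z)^2
        + 1 / (p * s) * (B z - Bb z) * (rinv (- yi) z)^2 * (exp (\<i> * z) - (C * exp (\<i> * z) - 1) / s))"
  define T where "T = UNIV - {- yi, of_real c + yi, of_real c - yi}"
  have T: "open T" "yi \<in> T" unfolding T_def using y c
    by (auto simp: open_Diff yi_def complex_eq_iff)
  have eq: "GG c y = (\<lambda>z. g2 z / (z - yi)^Suc 1 + g0 z)"
  proof
    fix z
    show "GG c y z = g2 z / (z - yi)^Suc 1 + g0 z"
    proof -
      have "GG c y z = (rinv yi z)^2 * g2 z + g0 z"
        unfolding GG_alt Gform_decomp1[OF s0[unfolded s_def] p0[unfolded p_def]]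
        unfolding g2_def g0_def B_def Bb_def p_def s_def C_def yi_def by simp
      moreover have "(rinv yi z)^2 * g2 z = g2 z / (z - yi)^Suc 1"
        by (simp add: rinv_def power_one_over power2_eq_square)
      ultimately show ?thesis by simp
    qed
  qed
  have hg2: "g2 holomorphic_on T" unfolding g2_def B_def Bb_def T_def
    by (auto intro!: holomorphic_intros)
  have hg0: "g0 holomorphic_on T" unfolding g0_def B_def Bb_def T_def
    by (auto intro!: holomorphic_intros)
  have "residue (GG c y) yi = residue (\<lambda>z. g2 z / (z - yi)^Suc 1) yi + residue g0 yi"
    unfolding eq
    by (rule residue_add[OF T]) (auto intro!: holomorphic_intros hg2[THEN holomorphic_on_subset] hg0[THEN holomorphic_on_subset])
  also have "residue g0 yi = 0" by (rule residue_holo[OF T hg0])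
  also have "residue (\<lambda>z. g2 z / (z - yi)^Suc 1) yi = deriv g2 yi"
    using residue_holomorphic_over_power[OF T hg2, of 1] by simp
  also have "deriv g2 yi = ?rhs"
  proof (rule DERIV_imp_deriv)
    have ne: "yi \<noteq> of_real c + yi" "yi \<noteq> of_real c - yi" using c y unfolding yi_def by (auto simp: complex_eq_iff)
    show "(g2 has_field_derivative ?rhs) (at yi)"
      unfolding g2_def B_def Bb_def
      apply (rule derivative_eq_intros refl | (simp add: ne c s0; fail))+
      using s0 p0 by (simp add: field_simps power2_eq_square)
  qed
  finally show ?thesis by simp
qed


lemma residue_at_c_iy:
  fixes c y :: real
  assumes y: "y > 0" and c: "c \<noteq> 0"
  defines "p \<equiv> complex_of_real pi" and "s \<equiv> complex_of_real (sinh y)" and "C \<equiv> complex_of_real (cosh y)"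
    and "yi \<equiv> \<i> * complex_of_real y"
  defines "A \<equiv> rinv (- yi)" and "Ab \<equiv> rinv yi" and "q \<equiv> of_real c + yi"
  shows "residue (GG c y) q =
     - (\<i> / (p * s)) * ((- (\<i> * exp (\<i> * q))) * (A q)^2 + (C - exp (\<i> * q)) * (2 * A q * (- (A q * A q))))
     + 1 / (p * s) * (((A q)^2 + (Ab q)^2) * exp (\<i> * q) - ((A q)^2 - (Ab q)^2) * (C * exp (\<i> * q) - 1) / s)"
    (is "_ = ?rhs")
proof -
  have s0: "s \<noteq> 0" using y unfolding s_def by simp
  have p0: "p \<noteq> 0" unfolding p_def by simp
  define B where "B = rinv q"
  define Bb where "Bb = rinv (of_real c - yi)"
  define k2 where "k2 = (\<lambda>z. - (\<i> / (p * s)) * (C - exp (\<i> * z)) * (A z)^2)"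
  define k1 where "k1 = (\<lambda>z. 1 / (p * s) * (((A z)^2 + (Ab z)^2) * exp (\<i> * z) - ((A z)^2 - (Ab z)^2) * (C * exp (\<i> * z) - 1) / s))"
  define k0 where "k0 = (\<lambda>z. \<i> / (p * s) * (C - exp (\<i> * z)) * (Ab z)^2 * (Bb z)^2
        - 1 / (p * s) * Bb z * (((A z)^2 + (Ab z)^2) * exp (\<i> * z) - ((A z)^2 - (Ab z)^2) * (C * exp (\<i> * z) - 1) / s))"
  define T where "T = UNIV - {- yi, yi, of_real c - yi}"
  have T: "open T" "q \<in> T" unfolding T_def q_def using y c
    by (auto simp: open_Diff yi_def complex_eq_iff)
  have eq: "GG c y = (\<lambda>z. (k2 z / (z - q)^Suc 1 + k1 z / (z - q)) + k0 z)"
  proof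
    fix z
    have "GG c y z = (B z)^2 * k2 z + B z * k1 z + k0 z"
      unfolding GG_alt Gform_decomp2[OF s0[unfolded s_def] p0[unfolded p_def]]
      unfolding k2_def k1_def k0_def A_def Ab_def B_def Bb_def p_def s_def C_def yi_def q_def by simp
    moreover have "(B z)^2 * k2 z = k2 z / (z - q)^Suc 1" "B z * k1 z = k1 z / (z - q)"
      by (simp_all add: B_def rinv_def power_one_over power2_eq_square)
    ultimately show "GG c y z = (k2 z / (z - q)^Suc 1 + k1 z / (z - q)) + k0 z" by simp
  qed
  have hk2: "k2 holomorphic_on T" unfolding k2_def A_def T_def
    by (auto intro!: holomorphic_intros)
  have hk1: "k1 holomorphic_on T" unfolding k1_def A_def Ab_def T_def
    using s0 by (auto intro!: holomorphic_intros)
  have hk0: "k0 holomorphic_on T" unfolding k0_def A_def Ab_def Bb_def T_def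
    using s0 by (auto intro!: holomorphic_intros)
  have qT: "\<And>z. z \<in> T - {q} \<Longrightarrow> z - q \<noteq> 0" by auto
  have "residue (GG c y) q = residue (\<lambda>z. k2 z / (z - q)^Suc 1 + k1 z / (z - q)) q + residue k0 q"
    unfolding eq
    by (rule residue_add[OF T]) (auto intro!: holomorphic_intros hk2[THEN holomorphic_on_subset] 
          hk1[THEN holomorphic_on_subset] hk0[THEN holomorphic_on_subset])
  also have "residue (\<lambda>z. k2 z / (z - q)^Suc 1 + k1 z / (z - q)) q =
      residue (\<lambda>z. k2 z / (z - q)^Suc 1) q + residue (\<lambda>z. k1 z / (z - q)) q"
    by (rule residue_add[OF T]) (auto intro!: holomorphic_intros hk2[THEN holomorphic_on_subset] 
          hk1[THEN holomorphic_on_subset])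
  also have "residue k0 q = 0" by (rule residue_holo[OF T hk0])
  also have "residue (\<lambda>z. k1 z / (z - q)) q = k1 q" by (rule residue_simple[OF T hk1])
  also have "residue (\<lambda>z. k2 z / (z - q)^Suc 1) q = deriv k2 q"
    using residue_holomorphic_over_power[OF T hk2, of 1] by simp
  also have "deriv k2 q = - (\<i> / (p * s)) * ((- (\<i> * exp (\<i> * q))) * (A q)^2 + (C - exp (\<i> * q)) * (2 * A q * (- (A q * A q))))"
  proof (rule DERIV_imp_deriv)
    have ne: "q \<noteq> - yi" using y unfolding yi_def q_def by (auto simp: complex_eq_iff)
    show "(k2 has_field_derivative - (\<i> / (p * s)) * ((- (\<i> * exp (\<i> * q))) * (A q)^2 + (C - exp (\<i> * q)) * (2 * A q * (- (A q * A q))))) (at q)"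
      unfolding k2_def A_def
      apply (rule derivative_eq_intros refl | (simp add: ne c s0; fail))+
      using s0 p0 by (simp add: field_simps power2_eq_square)
  qed
  finally show ?thesis unfolding k1_def by simp
qed

lemma alg_r1:
  fixes e cc yy p s C :: complex
  assumes e0: "e \<noteq> 0" and s0: "s \<noteq> 0" and c0: "cc \<noteq> 0" and d0: "cc - 2 * \<i> * yy \<noteq> 0" and p0: "p \<noteq> 0"
    and sdef: "s = (1/e - e) / 2" and Cdef: "C = (1/e + e) / 2"
  defines "b \<equiv> 1 / (\<i> * yy - (cc + \<i> * yy))" and "bb \<equiv> 1 / (\<i> * yy - (cc - \<i> * yy))"
  shows "\<i> / (p * s) * ((- (\<i> * e)) * bb^2 + (C - e) * (2 * bb * (- (bb * bb))))
     + 1 / (p * s) * ((- (b * b) + bb * bb) * (e + (C * e - 1) / s)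
          + (b - bb) * (\<i> * e + C * (\<i> * e) / s))
   = 2 * \<i> / p * (1 / (cc - 2 * \<i> * yy))^3 + e / (p * s) * (1 / (cc - 2 * \<i> * yy))^2
     - \<i> / (p * s^2) * (1 / cc - 1 / (cc - 2 * \<i> * yy))"
proof -
  have b: "b = - 1 / cc" unfolding b_def by (simp add: algebra_simps)
  have bb: "bb = - 1 / (cc - 2 * \<i> * yy)" unfolding bb_def
    by (metis (no_types, lifting) add_diff_eq diff_diff_eq2 divide_minus_left divide_minus_right minus_diff_eq mult_2 ring_class.ring_distribs(2))
  have Ce: "C - e = s" unfolding sdef Cdef by (simp add: field_simps)
  have Ce2: "C * e - 1 = - s * e" unfolding sdef Cdef using e0 by (simp add: field_simps)
  have Ce3: "s * e + C * e = 1" unfolding sdef Cdef using e0 by (simp add: field_simps)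
  define d where "d = cc - 2 * \<i> * yy"
  have d0': "d \<noteq> 0" using d0 d_def by simp
  show ?thesis unfolding b bb Ce Ce2 d_def[symmetric]
    using s0 p0 c0 d0' e0 Ce3
    apply (simp add: field_simps power2_eq_square power3_eq_cube)
    using Ce3 by algebra
qed


lemma alg_r2:
  fixes e cc yy p s C :: complex
  assumes e0: "e \<noteq> 0" and s0: "s \<noteq> 0" and c0: "cc \<noteq> 0" and d0: "cc + 2 * \<i> * yy \<noteq> 0" and p0: "p \<noteq> 0"
    and sdef: "s = (1/e - e) / 2" and Cdef: "C = (1/e + e) / 2"
  defines "A \<equiv> 1 / (cc + \<i> * yy - - (\<i> * yy))" and "Ab \<equiv> 1 / (cc + \<i> * yy - \<i> * yy)"
  shows "- (\<i> / (p * s)) * ((- (\<i> * e)) * A^2 + (C - e) * (2 * A * (- (A * A))))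
     + 1 / (p * s) * ((A^2 + Ab^2) * e - (A^2 - Ab^2) * (C * e - 1) / s)
   = 2 * \<i> / p * (1 / (cc + 2 * \<i> * yy))^3 + e / (p * s) * (1 / (cc + 2 * \<i> * yy))^2"
proof -
  define d where "d = cc + 2 * \<i> * yy"
  have d0': "d \<noteq> 0" using d0 d_def by simp
  have A: "A = 1 / d" unfolding A_def d_def by (simp add: algebra_simps)
  have Ab: "Ab = 1 / cc" unfolding Ab_def by simp
  have Ce: "C - e = s" unfolding sdef Cdef by (simp add: field_simps)
  have Ce2: "C * e - 1 = - s * e" unfolding sdef Cdef using e0 by (simp add: field_simps)
  have Ce3: "s * e + C * e = 1" unfolding sdef Cdef using e0 by (simp add: field_simps)
  show ?thesis unfolding A Ab Ce Ce2 d_def[symmetric]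
    using s0 p0 c0 d0' e0 Ce3
    by (simp add: field_simps power2_eq_square power3_eq_cube)
qed


lemma re_combo:
  fixes u v e s c :: real
  assumes s0: "s \<noteq> 0" and c0: "c \<noteq> 0"
  defines "a \<equiv> complex_of_real u - \<i> * complex_of_real v" and "ab \<equiv> complex_of_real u + \<i> * complex_of_real v"
  shows "Re (2 * complex_of_real pi * \<i> * (
      2 * \<i> / complex_of_real pi * ab^3 + complex_of_real e / (complex_of_real pi * complex_of_real s) * ab^2
     - \<i> / (complex_of_real pi * (complex_of_real s)^2) * (1 / complex_of_real c - ab)
     + (2 * \<i> / complex_of_real pi * a^3 + complex_of_real e / (complex_of_real pi * complex_of_real s) * a^2)))
   = - 4 * (2 * u^3 - 6 * u * v^2) + 2 * (1 / c - u) / s^2"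
proof -
  have p0: "complex_of_real pi \<noteq> 0" by simp
  have s0': "complex_of_real s \<noteq> 0" using s0 by simp
  have c0': "complex_of_real c \<noteq> 0" using c0 by simp
  have "2 * complex_of_real pi * \<i> * (
      2 * \<i> / complex_of_real pi * ab^3 + complex_of_real e / (complex_of_real pi * complex_of_real s) * ab^2
     - \<i> / (complex_of_real pi * (complex_of_real s)^2) * (1 / complex_of_real c - ab)
     + (2 * \<i> / complex_of_real pi * a^3 + complex_of_real e / (complex_of_real pi * complex_of_real s) * a^2))
    = complex_of_real (- 4 * (2 * u^3 - 6 * u * v^2) + 2 * (1 / c - u) / s^2)
      + \<i> * complex_of_real (2 * e * (2 * u^2 - 2 * v^2) / s - 2 * v / s^2)"
    unfolding a_def ab_def using p0 s0' c0'
    by (simp add: field_simps power2_eq_square power3_eq_cube)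
  thus ?thesis by simp
qed

lemma real_final:
  fixes y :: real and n :: int
  assumes y: "y > 0" and n: "n \<noteq> 0" and s0: "s \<noteq> 0"
  defines "c \<equiv> 2 * pi * of_int n"
  defines "D \<equiv> c^2 + 4 * y^2"
  shows "- 4 * (2 * (c / D)^3 - 6 * (c / D) * (2 * y / D)^2) + 2 * (1 / c - c / D) / s^2
    = pi * n * (3 * y^2 - pi^2 * n^2) / (y^2 + pi^2 * n^2)^3
        + y^2 / (pi * n * (y^2 + pi^2 * n^2) * s^2)"
proof -
  define m where "m = pi * of_int n"
  define Q where "Q = y^2 + m^2"
  have m0: "m \<noteq> 0" unfolding m_def using n by simp
  have Q0: "Q \<noteq> 0" unfolding Q_def using y by (simp add: add_pos_nonneg)
  have cm: "c = 2 * m" unfolding c_def m_def by simp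
  have DQ: "D = 4 * Q" unfolding D_def cm Q_def by (simp add: power2_eq_square algebra_simps)
  have r1: "pi * n * (3 * y^2 - pi^2 * n^2) = m * (3 * y^2 - m^2)" unfolding m_def by (simp add: power2_eq_square)
  have r2: "y^2 + pi^2 * n^2 = Q" unfolding Q_def m_def by (simp add: power2_eq_square)
  have r3: "pi * n = m" unfolding m_def by simp
  have t1: "- 4 * (2 * (c / D)^3 - 6 * (c / D) * (2 * y / D)^2) = m * (3 * y^2 - m^2) / Q^3"
    unfolding cm DQ using Q0 m0 by (simp add: field_simps power2_eq_square power3_eq_cube)
  have t2: "2 * (1 / c - c / D) / s^2 = y^2 / (m * Q * s^2)"
  proof -
    have "2 * (1 / c - c / D) / s^2 = (Q - m^2) / (m * Q * s^2)"
      unfolding cm DQ using Q0 m0 s0 by (simp add: field_simps power2_eq_square)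
    also have "Q - m^2 = y^2" unfolding Q_def by simp
    finally show ?thesis .
  qed
  have r4: "pi^2 * real_of_int (n^2) = m^2" unfolding m_def by (simp add: power2_eq_square)
  show ?thesis unfolding r1 r2 r3 t1 t2 r4 Q_def ..
qed

lemma total_residue:
  fixes y :: real and n :: int
  assumes y: "y > 0" and n: "n \<noteq> 0"
  defines "c \<equiv> 2 * pi * of_int n"
  shows "Re (2 * pi * \<i> * (residue (GG c y) (\<i> * of_real y) + residue (GG c y) (of_real c + \<i> * of_real y)))
    = pi * n * (3 * y^2 - pi^2 * n^2) / (y^2 + pi^2 * n^2)^3
        + y^2 / (pi * n * (y^2 + pi^2 * n^2) * (sinh y)^2)"
proof -
  have c0: "c \<noteq> 0" unfolding c_def using n by simp
  define e where "e = complex_of_real (exp (- y))"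
  have e0: "e \<noteq> 0" unfolding e_def by simp
  have s0r: "sinh y \<noteq> 0" using y by simp
  have s0: "complex_of_real (sinh y) \<noteq> 0" using s0r by simp
  have p0: "complex_of_real pi \<noteq> 0" by simp
  have sdef: "complex_of_real (sinh y) = (1 / e - e) / 2"
  proof -
    have "sinh y = (1 / exp (- y) - exp (- y)) / 2" by (simp add: sinh_def exp_minus field_simps)
    from arg_cong[OF this, of complex_of_real] show ?thesis unfolding e_def by simp
  qed
  have Cdef: "complex_of_real (cosh y) = (1 / e + e) / 2"
  proof -
    have "cosh y = (1 / exp (- y) + exp (- y)) / 2" by (simp add: cosh_def exp_minus field_simps)
    from arg_cong[OF this, of complex_of_real] show ?thesis unfolding e_def by simp
  qed
  have E1: "exp (\<i> * (\<i> * complex_of_real y)) = e" unfolding e_def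
    by (simp flip: exp_of_real)
  have E2: "exp (\<i> * (complex_of_real c + \<i> * complex_of_real y)) = e"
  proof -
    have "\<i> * (complex_of_real c + \<i> * complex_of_real y) = \<i> * (complex_of_int n * (complex_of_real pi * 2)) + (- complex_of_real y)"
      unfolding c_def by (simp add: algebra_simps)
    hence "exp (\<i> * (complex_of_real c + \<i> * complex_of_real y)) = exp (\<i> * (complex_of_int n * (complex_of_real pi * 2))) * exp (- complex_of_real y)"
      by (simp only: exp_add)
    also have "\<dots> = e" unfolding exp_2pi_1_int e_def by (simp flip: exp_of_real)
    finally show ?thesis .
  qed
  have d1: "complex_of_real c - 2 * \<i> * complex_of_real y \<noteq> 0" using c0 by (auto simp: complex_eq_iff)
  have d2: "complex_of_real c + 2 * \<i> * complex_of_real y \<noteq> 0" using c0 by (auto simp: complex_eq_iff)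
  have cc0: "complex_of_real c \<noteq> 0" using c0 by simp
  have r1: "residue (GG c y) (\<i> * of_real y) = 2 * \<i> / complex_of_real pi * (1 / (complex_of_real c - 2 * \<i> * complex_of_real y))^3
      + e / (complex_of_real pi * complex_of_real (sinh y)) * (1 / (complex_of_real c - 2 * \<i> * complex_of_real y))^2
     - \<i> / (complex_of_real pi * (complex_of_real (sinh y))^2) * (1 / complex_of_real c - 1 / (complex_of_real c - 2 * \<i> * complex_of_real y))"
    unfolding residue_at_iy[OF y c0] E1 rinv_def
    by (rule alg_r1[OF e0 s0 cc0 d1 p0 sdef Cdef])
  have r2: "residue (GG c y) (of_real c + \<i> * of_real y) = 2 * \<i> / complex_of_real pi * (1 / (complex_of_real c + 2 * \<i> * complex_of_real y))^3
      + e / (complex_of_real pi * complex_of_real (sinh y)) * (1 / (complex_of_real c + 2 * \<i> * complex_of_real y))^2"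
    unfolding residue_at_c_iy[OF y c0] E2 rinv_def
    by (rule alg_r2[OF e0 s0 cc0 d2 p0 sdef Cdef])
  define D where "D = c^2 + (2 * y)^2"
  have y2: "2 * y \<noteq> 0" using y by simp
  have iv: "1 / (complex_of_real c - 2 * \<i> * complex_of_real y) = complex_of_real (c / D) + \<i> * complex_of_real (2 * y / D)"
     "1 / (complex_of_real c + 2 * \<i> * complex_of_real y) = complex_of_real (c / D) - \<i> * complex_of_real (2 * y / D)"
    using inv_cpx[OF y2 D_def] by (simp_all add: diff_divide_distrib add_divide_distrib mult.assoc mult.left_commute)
  have "Re (2 * pi * \<i> * (residue (GG c y) (\<i> * of_real y) + residue (GG c y) (of_real c + \<i> * of_real y)))
     = - 4 * (2 * (c / D)^3 - 6 * (c / D) * (2 * y / D)^2) + 2 * (1 / c - c / D) / (sinh y)^2"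
    unfolding r1 r2 iv e_def using re_combo[OF s0r c0, of "c / D" "2 * y / D" "exp (- y)"]
    by (simp add: mult.assoc)
  also have "\<dots> = pi * n * (3 * y^2 - pi^2 * n^2) / (y^2 + pi^2 * n^2)^3
        + y^2 / (pi * n * (y^2 + pi^2 * n^2) * (sinh y)^2)"
    using real_final[OF y n s0r] unfolding D_def c_def by (simp add: power2_eq_square)
  finally show ?thesis .
qed

theorem lemma3p10:
  fixes y :: real and n :: int
  assumes "y > 0" and "n \<noteq> 0"
  shows "integrable lborel (\<lambda>x. hinv x y * Hgrad_dot (pk 0) (pk n) x y)
    \<and> integrable lborel (\<lambda>x. pk n x y * Hgrad_dot (pk 0) hinv x y)
    \<and> (\<integral>x. hinv x y * Hgrad_dot (pk 0) (pk n) x y \<partial>lborel)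
      + 2 * (\<integral>x. pk n x y * Hgrad_dot (pk 0) hinv x y \<partial>lborel)
      = pi * n * (3 * y^2 - pi^2 * n^2) / (y^2 + pi^2 * n^2)^3
        + y^2 / (pi * n * (y^2 + pi^2 * n^2) * (sinh y)^2)"
proof -
  have y: "y > 0" and n: "n \<noteq> 0" using assms by auto
  have y0: "y \<noteq> 0" using y by simp
  define c where "c = 2 * pi * of_int n"
  have c0: "c \<noteq> 0" unfolding c_def using n by simp
  define S where "S = Sset c y"
  have finS: "finite S" unfolding S_def Sset_def by simp
  have noreal: "\<And>p. p \<in> S \<Longrightarrow> Im p \<noteq> 0" unfolding S_def Sset_def using y by auto
  define R0 where "R0 = 2 * (\<bar>c\<bar> + \<bar>y\<bar>) + 2"
  define M1 where "M1 = \<bar>2 * pi / sinh y\<bar> * (\<bar>cosh y\<bar> + 1) * 8"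
  define M2 where "M2 = (\<bar>2 * pi / sinh y\<bar> + \<bar>2 * pi / (sinh y)^2\<bar> * (\<bar>cosh y\<bar> + 1)) * 4"
  have M1: "M1 \<ge> 0" unfolding M1_def by simp
  have M2: "M2 \<ge> 0" unfolding M2_def by simp
  have bd1: "\<And>z. Im z \<ge> 0 \<Longrightarrow> norm z \<ge> R0 \<Longrightarrow> norm (G1 c y z) \<le> M1 / (norm z)^2"
    unfolding M1_def R0_def by (rule G1_bound)
  have bd2: "\<And>z. Im z \<ge> 0 \<Longrightarrow> norm z \<ge> R0 \<Longrightarrow> norm (G2 c y z) \<le> M2 / (norm z)^2"
    unfolding M2_def R0_def by (rule G2_bound)
  have bdG: "norm (GG c y z) \<le> (M1 + 2 * M2) / (norm z)^2" if "Im z \<ge> 0" "norm z \<ge> R0" for z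
  proof -
    have "norm (GG c y z) \<le> norm (G1 c y z) + 2 * norm (G2 c y z)"
      unfolding GG_def by (rule order_trans[OF norm_triangle_ineq]) (simp add: norm_mult)
    also have "\<dots> \<le> M1 / (norm z)^2 + 2 * (M2 / (norm z)^2)"
      using bd1[OF that] bd2[OF that] by linarith
    finally show ?thesis by (simp add: add_divide_distrib)
  qed
  have hG: "GG c y holomorphic_on (UNIV - S)" unfolding GG_def[abs_def] S_def
    using G1_holo G2_holo by (auto intro!: holomorphic_intros)
  note R1 = rect_residue_integral[OF G1_holo[of c y, folded S_def] finS noreal M1 bd1]
  note R2 = rect_residue_integral[OF G2_holo[of c y, folded S_def] finS noreal M2 bd2]
  have M12: "M1 + 2 * M2 \<ge> 0" using M1 M2 by simp
  have RG: "integrable lborel (\<lambda>x. GG c y (of_real x)) \<and>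
    (\<integral>x. GG c y (of_real x) \<partial>lborel) = 2*pi*\<i> * (\<Sum>p\<in>{p\<in>S. Im p > 0}. residue (GG c y) p)"
    using rect_residue_integral[OF hG finS noreal M12 bdG] .
  have upper: "{p\<in>S. Im p > 0} = {\<i> * of_real y, of_real c + \<i> * of_real y}"
    unfolding S_def Sset_def using y by auto
  have neq: "\<i> * of_real y \<noteq> of_real c + \<i> * of_real y" using c0 by (simp add: complex_eq_iff)
  have intG1: "integrable lborel (\<lambda>x. G1 c y (of_real x))" using R1 by blast
  have intG2: "integrable lborel (\<lambda>x. G2 c y (of_real x))" using R2 by blast
  have valG: "(\<integral>x. GG c y (of_real x) \<partial>lborel) = 2 * pi * \<i> * (residue (GG c y) (\<i> * of_real y) + residue (GG c y) (of_real c + \<i> * of_real y))"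
    using RG unfolding upper using neq by simp
  have e1: "(\<lambda>x. hinv x y * Hgrad_dot (pk 0) (pk n) x y) = (\<lambda>x. Re (G1 c y (of_real x)))"
    unfolding c_def using I1_eq[OF y0] by auto
  have e2: "(\<lambda>x. pk n x y * Hgrad_dot (pk 0) hinv x y) = (\<lambda>x. Re (G2 c y (of_real x)))"
    unfolding c_def using I2_eq[OF y0] by auto
  have i1: "integrable lborel (\<lambda>x. hinv x y * Hgrad_dot (pk 0) (pk n) x y)"
    unfolding e1 by (rule integrable_Re[OF intG1])
  have i2: "integrable lborel (\<lambda>x. pk n x y * Hgrad_dot (pk 0) hinv x y)"
    unfolding e2 by (rule integrable_Re[OF intG2])
  have "(\<integral>x. hinv x y * Hgrad_dot (pk 0) (pk n) x y \<partial>lborel)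
      + 2 * (\<integral>x. pk n x y * Hgrad_dot (pk 0) hinv x y \<partial>lborel)
      = Re (\<integral>x. G1 c y (of_real x) \<partial>lborel) + 2 * Re (\<integral>x. G2 c y (of_real x) \<partial>lborel)"
    unfolding e1 e2 integral_Re[OF intG1] integral_Re[OF intG2] ..
  also have "\<dots> = Re (\<integral>x. GG c y (of_real x) \<partial>lborel)"
  proof -
    have "(\<integral>x. GG c y (of_real x) \<partial>lborel) = (\<integral>x. G1 c y (of_real x) \<partial>lborel) + 2 * (\<integral>x. G2 c y (of_real x) \<partial>lborel)"
      unfolding GG_def using intG1 intG2 by simp
    thus ?thesis by simp
  qed
  also have "\<dots> = pi * n * (3 * y^2 - pi^2 * n^2) / (y^2 + pi^2 * n^2)^3
        + y^2 / (pi * n * (y^2 + pi^2 * n^2) * (sinh y)^2)"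
    unfolding valG unfolding c_def by (rule total_residue[OF y n])
  finally show ?thesis using i1 i2 by blast
qed


end
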